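(* Let $A\in\mathbb{C}^{m\times n}$ and $X\in\mathbb{C}^{n\times m}$. Then the following are equivalent: (1) $A^{\mathfrak{m}}$ exists and $X=A^{\mathfrak{m}}$; (2) $XAa=a$ for all $a\in\mathcal{R}(A^{\sim})$, and $Xb=0$ for all $b\in\mathcal{N}(A^{\sim})$; (3) $AX=P_{\mathcal{R}(A),\mathcal{N}(A^{\sim})}$, $XA=P_{\mathcal{R}(X),\mathcal{N}(A)}$, and $\mathcal{R}(X)\subseteq\mathcal{R}(A^{\sim})$.
   Context: For a positive integer $k$, the Minkowski metric matrix of order $k$ is $G_k=\mathrm{diag}(1,-I_{k-1})$ (with $G_1=(1)$). For $A\in\mathbb{C}^{m\times n}$, the Minkowski adjoint is $A^{\sim}=G_nA^*G_m$, where $A^*$ is the conjugate transpose. The Minkowski inverse of $A$, denoted $A^{\mathfrak{m}}$, is a matrix $X\in\mathbb{C}^{n\times m}$ with $AXA=A$, $XAX=X$, $(AX)^{\sim}=AX$, $(XA)^{\sim}=XA$ (unique if it exists). $\mathcal{R}(\cdot)$, $\mathcal{N}(\cdot)$ denote range and null space. For subspaces $\mathcal{S},\mathcal{T}$ of $\mathbb{C}^k$ with $\mathcal{S}\oplus\mathcal{T}=\mathbb{C}^k$, $P_{\mathcal{S},\mathcal{T}}$ denotes the projector onto $\mathcal{S}$ along $\mathcal{T}$ (statement (3) includes that the relevant direct sums hold). *)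

theory Defs
  imports "Jordan_Normal_Form.Schur_Decomposition" "Jordan_Normal_Form.Matrix_Kernel"
begin

definition minkowski_G :: "nat \<Rightarrow> complex mat" where
  "minkowski_G k = mat k k (\<lambda>(i,j). if i = j then (if i = 0 then 1 else -1) else 0)"

definition mink_adj :: "complex mat \<Rightarrow> complex mat" where
  "mink_adj A = minkowski_G (dim_col A) * mat_adjoint A * minkowski_G (dim_row A)"

definition is_minkowski_inverse :: "complex mat \<Rightarrow> complex mat \<Rightarrow> bool" where
  "is_minkowski_inverse A X \<longleftrightarrow>
     X \<in> carrier_mat (dim_col A) (dim_row A) \<and>
     A * X * A = A \<and> X * A * X = X \<and>
     mink_adj (A * X) = A * X \<and> mink_adj (X * A) = X * A"

definition mink_inverse_exists :: "complex mat \<Rightarrow> bool" where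
  "mink_inverse_exists A \<longleftrightarrow> (\<exists>X. is_minkowski_inverse A X)"

definition mink_inverse :: "complex mat \<Rightarrow> complex mat" where
  "mink_inverse A = (THE X. is_minkowski_inverse A X)"

definition mat_range :: "complex mat \<Rightarrow> complex vec set" where
  "mat_range A = {A *\<^sub>v x | x. x \<in> carrier_vec (dim_col A)}"

definition direct_sum_space :: "nat \<Rightarrow> complex vec set \<Rightarrow> complex vec set \<Rightarrow> bool" where
  "direct_sum_space k S T \<longleftrightarrow>
     S \<subseteq> carrier_vec k \<and> T \<subseteq> carrier_vec k \<and>
     (\<forall>v \<in> carrier_vec k. \<exists>s\<in>S. \<exists>t\<in>T. v = s + t) \<and>
     S \<inter> T = {0\<^sub>v k}"

definition is_projector :: "nat \<Rightarrow> complex mat \<Rightarrow> complex vec set \<Rightarrow> complex vec set \<Rightarrow> bool" where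
  "is_projector k P S T \<longleftrightarrow>
     direct_sum_space k S T \<and> P \<in> carrier_mat k k \<and>
     (\<forall>s\<in>S. P *\<^sub>v s = s) \<and> (\<forall>t\<in>T. P *\<^sub>v t = 0\<^sub>v k)"

end

theory Submission
  imports Defs
begin

definition sg :: "nat \<Rightarrow> complex" where "sg i = (if i = 0 then 1 else -1)"

lemma sg_sq[simp]: "sg i * sg i = 1" by (simp add: sg_def)
lemma sg_sq'[simp]: "sg i * (sg i * x) = x" by (simp add: sg_def)
lemma cnj_sg[simp]: "cnj (sg i) = sg i" by (simp add: sg_def)

lemma G_alt: "minkowski_G k = mat k k (\<lambda>(i,j). if i = j then sg i else 0)"
  unfolding minkowski_G_def sg_def by (rule eq_matI) auto

lemma G_mult_left: assumes "M \<in> carrier_mat k q"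
  shows "minkowski_G k * M = mat k q (\<lambda>(i,j). sg i * M $$ (i,j))"
proof (rule eq_matI)
  fix i j assume ij: "i < dim_row (mat k q (\<lambda>(i,j). sg i * M $$ (i,j)))" "j < dim_col (mat k q (\<lambda>(i,j). sg i * M $$ (i,j)))"
  hence i: "i < k" and j: "j < q" by auto
  have "(minkowski_G k * M) $$ (i,j) = (\<Sum>l<k. (if i = l then sg i else 0) * M $$ (l,j))"
    using i j assms unfolding G_alt by (simp add: scalar_prod_def lessThan_atLeast0)
  also have "\<dots> = (\<Sum>l<k. if i = l then sg i * M $$ (i,j) else 0)"
    by (rule sum.cong) auto
  also have "\<dots> = sg i * M $$ (i,j)" using i by simp
  finally show "(minkowski_G k * M) $$ (i,j) = mat k q (\<lambda>(i,j). sg i * M $$ (i,j)) $$ (i,j)" using i j by simp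
qed (use assms in \<open>auto simp: G_alt\<close>)

lemma G_mult_right: assumes "M \<in> carrier_mat q k"
  shows "M * minkowski_G k = mat q k (\<lambda>(i,j). M $$ (i,j) * sg j)"
proof (rule eq_matI)
  fix i j assume ij: "i < dim_row (mat q k (\<lambda>(i,j). M $$ (i,j) * sg j))" "j < dim_col (mat q k (\<lambda>(i,j). M $$ (i,j) * sg j))"
  hence i: "i < q" and j: "j < k" by auto
  have "(M * minkowski_G k) $$ (i,j) = (\<Sum>l<k. M $$ (i,l) * (if l = j then sg l else 0))"
    using i j assms unfolding G_alt by (simp add: scalar_prod_def lessThan_atLeast0)
  also have "\<dots> = (\<Sum>l<k. if j = l then M $$ (i,j) * sg j else 0)"
    by (rule sum.cong) auto
  also have "\<dots> = M $$ (i,j) * sg j" using j by simp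
  finally show "(M * minkowski_G k) $$ (i,j) = mat q k (\<lambda>(i,j). M $$ (i,j) * sg j) $$ (i,j)" using i j by simp
qed (use assms in \<open>auto simp: G_alt\<close>)

lemma madj_alt: "mink_adj A = mat (dim_col A) (dim_row A) (\<lambda>(i,j). sg i * sg j * cnj (A $$ (j,i)))"
proof -
  have adj: "mat_adjoint A = mat (dim_col A) (dim_row A) (\<lambda>(i,j). cnj (A $$ (j,i)))"
    unfolding mat_adjoint_def by (rule eq_matI) (auto simp: mat_of_rows_index)
  show ?thesis unfolding mink_adj_def adj
    by (subst G_mult_left, force, subst G_mult_right, force, rule eq_matI, auto)
qed

lemma madj_carrier[simp]: "A \<in> carrier_mat m n \<Longrightarrow> mink_adj A \<in> carrier_mat n m"
  by (simp add: madj_alt)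
lemma madj_dims[simp]: "dim_row (mink_adj A) = dim_col A" "dim_col (mink_adj A) = dim_row A"
  by (simp_all add: madj_alt)
lemma madj_idx: "i < dim_col A \<Longrightarrow> j < dim_row A \<Longrightarrow> mink_adj A $$ (i,j) = sg i * sg j * cnj (A $$ (j,i))"
  by (simp add: madj_alt)

lemma madj_madj[simp]: "mink_adj (mink_adj A) = A"
  by (rule eq_matI) (auto simp: madj_idx)

lemma madj_mult: assumes "A \<in> carrier_mat p q" "B \<in> carrier_mat q r"
  shows "mink_adj (A * B) = mink_adj B * mink_adj A"
proof (rule eq_matI)
  fix i j assume "i < dim_row (mink_adj B * mink_adj A)" "j < dim_col (mink_adj B * mink_adj A)"
  hence i: "i < r" and j: "j < p" using assms by auto
  have "mink_adj (A * B) $$ (i,j) = sg i * sg j * cnj (\<Sum>k<q. A $$ (j,k) * B $$ (k,i))"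
    using i j assms by (simp add: madj_idx scalar_prod_def lessThan_atLeast0)
  also have "\<dots> = (\<Sum>k<q. (sg i * sg k * cnj (B $$ (k,i))) * (sg k * sg j * cnj (A $$ (j,k))))"
    by (simp add: sum_distrib_left mult_ac)
  also have "\<dots> = (mink_adj B * mink_adj A) $$ (i,j)"
    using i j assms by (simp add: madj_idx scalar_prod_def lessThan_atLeast0)
  finally show "mink_adj (A * B) $$ (i,j) = (mink_adj B * mink_adj A) $$ (i,j)" .
qed (use assms in auto)

lemma madj_add: assumes "A \<in> carrier_mat p q" "B \<in> carrier_mat p q"
  shows "mink_adj (A + B) = mink_adj A + mink_adj B"
  using assms by (intro eq_matI) (auto simp: madj_idx algebra_simps)

lemma madj_minus: assumes "A \<in> carrier_mat p q" "B \<in> carrier_mat p q"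
  shows "mink_adj (A - B) = mink_adj A - mink_adj B"
  using assms by (intro eq_matI) (auto simp: madj_idx algebra_simps)

lemma madj_one[simp]: "mink_adj (1\<^sub>m k) = 1\<^sub>m k"
  by (intro eq_matI) (auto simp: madj_idx)

lemma mat_eq_vecI: fixes M N :: "complex mat" assumes "M \<in> carrier_mat p q" "N \<in> carrier_mat p q"
  and "\<And>v. v \<in> carrier_vec q \<Longrightarrow> M *\<^sub>v v = N *\<^sub>v v"
  shows "M = N"
proof (rule eq_matI)
  fix i j assume "i < dim_row N" "j < dim_col N"
  hence i: "i < p" and j: "j < q" using assms by auto
  have "M $$ (i,j) = (M *\<^sub>v unit_vec q j) $ i" using i j assms(1) by simp
  also have "\<dots> = (N *\<^sub>v unit_vec q j) $ i" using assms(3)[of "unit_vec q j"] by simp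
  also have "\<dots> = N $$ (i,j)" using i j assms(2) by simp
  finally show "M $$ (i,j) = N $$ (i,j)" .
qed (use assms in auto)

lemma range_factor: fixes B C :: "complex mat" assumes "B \<in> carrier_mat p q" "C \<in> carrier_mat p r"
  and "\<And>v. v \<in> carrier_vec q \<Longrightarrow> B *\<^sub>v v \<in> mat_range C"
  shows "\<exists>Y \<in> carrier_mat r q. B = C * Y"
proof -
  have "\<forall>j. \<exists>y. j < q \<longrightarrow> y \<in> carrier_vec r \<and> B *\<^sub>v unit_vec q j = C *\<^sub>v y"
  proof (intro allI)
    fix j
    have "B *\<^sub>v unit_vec q j \<in> mat_range C" by (rule assms(3)) simp
    then obtain x where "x \<in> carrier_vec r" "B *\<^sub>v unit_vec q j = C *\<^sub>v x"
      using assms(2) unfolding mat_range_def by auto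
    thus "\<exists>y. j < q \<longrightarrow> y \<in> carrier_vec r \<and> B *\<^sub>v unit_vec q j = C *\<^sub>v y" by blast
  qed
  then obtain y where y: "\<And>j. j < q \<Longrightarrow> y j \<in> carrier_vec r \<and> B *\<^sub>v unit_vec q j = C *\<^sub>v y j"
    by metis
  define Y where "Y = mat r q (\<lambda>(i,j). y j $ i)"
  have colY: "j < q \<Longrightarrow> col Y j = y j" for j
    using y[of j] unfolding Y_def by (intro eq_vecI) auto
  have "B = C * Y"
  proof (rule eq_matI)
    fix i j assume "i < dim_row (C * Y)" "j < dim_col (C * Y)"
    hence i: "i < p" and j: "j < q" using assms by (auto simp: Y_def)
    have "B $$ (i,j) = (B *\<^sub>v unit_vec q j) $ i" using i j assms by simp
    also have "\<dots> = (C *\<^sub>v y j) $ i" using y[OF j] by simp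
    also have "\<dots> = (C * Y) $$ (i,j)" using i j assms colY[OF j] by (simp add: Y_def)
    finally show "B $$ (i,j) = (C * Y) $$ (i,j)" .
  qed (use assms in \<open>auto simp: Y_def\<close>)
  thus ?thesis unfolding Y_def by auto
qed

lemma assoc': "dim_col A = dim_row B \<Longrightarrow> dim_col B = dim_row C \<Longrightarrow> A * B * C = A * (B * C)"
  by (rule assoc_mult_mat[of A "dim_row A" "dim_col A" B "dim_col B" C "dim_col C"]) auto

lemma mult_zero_vec'[simp]: "M \<in> carrier_mat p q \<Longrightarrow> M *\<^sub>v 0\<^sub>v q = (0\<^sub>v p :: complex vec)"
  by (intro eq_vecI) auto

lemma MI_unique:
  assumes A: "A \<in> carrier_mat m n" and X: "is_minkowski_inverse A X" and Y: "is_minkowski_inverse A Y"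
  shows "X = Y"
proof -
  have Xc: "X \<in> carrier_mat n m" and Yc: "Y \<in> carrier_mat n m"
    using X Y A unfolding is_minkowski_inverse_def by auto
  note c = A Xc Yc madj_carrier[OF A] madj_carrier[OF Xc] madj_carrier[OF Yc]
  have d[simp]: "dim_row A = m" "dim_col A = n" "dim_row X = n" "dim_col X = m" "dim_row Y = n" "dim_col Y = m"
    using c by auto
  have 1: "A * X * A = A" "X * A * X = X" "mink_adj (A * X) = A * X" "mink_adj (X * A) = X * A"
    using X unfolding is_minkowski_inverse_def by auto
  have 2: "A * Y * A = A" "Y * A * Y = Y" "mink_adj (A * Y) = A * Y" "mink_adj (Y * A) = Y * A"
    using Y unfolding is_minkowski_inverse_def by auto
  have "X = X * (A * X)" using 1(2) c by simp
  also have "A * X = mink_adj X * mink_adj A" using 1(3) madj_mult[OF A Xc] by simp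
  also have "mink_adj A = mink_adj (A * Y * A)" using 2(1) by simp
  also have "\<dots> = mink_adj A * (mink_adj Y * mink_adj A)"
    unfolding madj_mult[OF mult_carrier_mat[OF A Yc] A] madj_mult[OF A Yc] by (simp add: assoc' del: assoc_mult_mat)
  also have "mink_adj Y * mink_adj A = A * Y" using 2(3) madj_mult[OF A Yc] by simp
  also have "X * (mink_adj X * (mink_adj A * (A * Y))) = X * (mink_adj X * mink_adj A) * (A * Y)"
    by (simp add: assoc' del: assoc_mult_mat)
  also have "mink_adj X * mink_adj A = A * X" using 1(3) madj_mult[OF A Xc] by simp
  finally have eX: "X = X * (A * X) * (A * Y)" .
  have "Y = (Y * A) * Y" using 2(2) c by simp
  also have "Y * A = mink_adj A * mink_adj Y" using 2(4) madj_mult[OF Yc A] by simp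
  also have "mink_adj A = mink_adj (A * X * A)" using 1(1) by simp
  also have "\<dots> = mink_adj A * mink_adj X * mink_adj A"
    unfolding madj_mult[OF mult_carrier_mat[OF A Xc] A] madj_mult[OF A Xc] by (simp add: assoc' del: assoc_mult_mat)
  also have "mink_adj A * mink_adj X = X * A" using 1(4) madj_mult[OF Xc A] by simp
  also have "X * A * mink_adj A * mink_adj Y * Y = X * A * (mink_adj A * mink_adj Y) * Y"
    by (simp add: assoc' del: assoc_mult_mat)
  also have "mink_adj A * mink_adj Y = Y * A" using 2(4) madj_mult[OF Yc A] by simp
  finally have eY: "Y = X * A * (Y * A) * Y" .
  have "X * (A * X) * (A * Y) = X * A * X * A * Y" by (simp add: assoc' del: assoc_mult_mat)
  also have "\<dots> = X * A * Y" using 1(2) by simp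
  finally have e1: "X * (A * X) * (A * Y) = X * A * Y" .
  have "X * A * (Y * A) * Y = X * A * (Y * A * Y)" by (simp add: assoc' del: assoc_mult_mat)
  also have "\<dots> = X * A * Y" using 2(2) by simp
  finally have e2: "X * A * (Y * A) * Y = X * A * Y" .
  show ?thesis using eX eY e1 e2 by simp
qed

lemma MI_iff: assumes A: "A \<in> carrier_mat m n"
  shows "(mink_inverse_exists A \<and> X = mink_inverse A) \<longleftrightarrow> is_minkowski_inverse A X"
proof
  assume "mink_inverse_exists A \<and> X = mink_inverse A"
  then obtain Y where Y: "is_minkowski_inverse A Y" and X: "X = mink_inverse A"
    unfolding mink_inverse_exists_def by auto
  have "mink_inverse A = Y" unfolding mink_inverse_def
    by (rule the_equality[of "is_minkowski_inverse A" Y, OF Y]) (use MI_unique[OF A _ Y] in auto)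
  thus "is_minkowski_inverse A X" using X Y by simp
next
  assume X: "is_minkowski_inverse A X"
  have "mink_inverse A = X" unfolding mink_inverse_def
    by (rule the_equality[of "is_minkowski_inverse A" X, OF X]) (use MI_unique[OF A _ X] in auto)
  thus "mink_inverse_exists A \<and> X = mink_inverse A" using X unfolding mink_inverse_exists_def by auto
qed

lemma one_to_two:
  assumes A: "A \<in> carrier_mat m n" and Xc: "X \<in> carrier_mat n m" and X: "is_minkowski_inverse A X"
  shows "(\<forall>a \<in> mat_range (mink_adj A). X * A *\<^sub>v a = a) \<and>
           (\<forall>b \<in> mat_kernel (mink_adj A). X *\<^sub>v b = 0\<^sub>v n)"
proof -
  note c = A Xc madj_carrier[OF A] madj_carrier[OF Xc]
  have d[simp]: "dim_row A = m" "dim_col A = n" "dim_row X = n" "dim_col X = m"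
    using c by auto
  have 1: "A * X * A = A" "X * A * X = X" "mink_adj (A * X) = A * X" "mink_adj (X * A) = X * A"
    using X unfolding is_minkowski_inverse_def by auto
  have "X * A * mink_adj A = mink_adj A * mink_adj X * mink_adj A"
    using 1(4) madj_mult[OF Xc A] by simp
  also have "\<dots> = mink_adj (A * X * A)"
    unfolding madj_mult[OF mult_carrier_mat[OF A Xc] A] madj_mult[OF A Xc]
    by (simp add: assoc' del: assoc_mult_mat)
  finally have XAB: "X * A * mink_adj A = mink_adj A" using 1(1) by simp
  have "X = X * (A * X)" using 1(2) by (simp add: assoc' del: assoc_mult_mat)
  also have "\<dots> = X * (mink_adj X * mink_adj A)" using 1(3) madj_mult[OF A Xc] by simp
  finally have XXB: "X = X * (mink_adj X * mink_adj A)" .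
  show ?thesis
  proof (intro conjI ballI)
    fix a assume "a \<in> mat_range (mink_adj A)"
    then obtain y where y: "y \<in> carrier_vec m" "a = mink_adj A *\<^sub>v y" unfolding mat_range_def by auto
    have "X * A *\<^sub>v a = (X * A * mink_adj A) *\<^sub>v y" using y
      assoc_mult_mat_vec[OF mult_carrier_mat[OF Xc A] madj_carrier[OF A] y(1)] by simp
    thus "X * A *\<^sub>v a = a" using XAB y by simp
  next
    fix b assume b: "b \<in> mat_kernel (mink_adj A)"
    have bc: "b \<in> carrier_vec m" and Bb: "mink_adj A *\<^sub>v b = 0\<^sub>v n"
      using b c mat_kernelD by blast+
    have "X *\<^sub>v b = X *\<^sub>v (mink_adj X *\<^sub>v (mink_adj A *\<^sub>v b))"
      using assoc_mult_mat_vec[OF Xc mult_carrier_mat[OF madj_carrier[OF Xc] madj_carrier[OF A]] bc]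
        assoc_mult_mat_vec[OF madj_carrier[OF Xc] madj_carrier[OF A] bc] XXB by simp
    also have "\<dots> = 0\<^sub>v n" using Bb c by (simp add: mult_zero_vec'[OF madj_carrier[OF Xc]] mult_zero_vec'[OF Xc])
    finally show "X *\<^sub>v b = 0\<^sub>v n" .
  qed
qed

lemma vec_minus_zeroD: "(u :: complex vec) \<in> carrier_vec k \<Longrightarrow> v \<in> carrier_vec k \<Longrightarrow> u - v = 0\<^sub>v k \<Longrightarrow> u = v"
proof -
  assume u: "u \<in> carrier_vec k" and v: "v \<in> carrier_vec k" and e: "u - v = 0\<^sub>v k"
  show "u = v"
  proof (rule eq_vecI)
    fix i assume i: "i < dim_vec v"
    have "(u - v) $ i = 0" using e i v by simp
    thus "u $ i = v $ i" using i u v by simp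
  qed (use u v in simp)
qed

lemma two_to_one:
  assumes A: "A \<in> carrier_mat m n" and Xc: "X \<in> carrier_mat n m"
    and H1: "\<forall>a \<in> mat_range (mink_adj A). X * A *\<^sub>v a = a"
    and H2: "\<forall>b \<in> mat_kernel (mink_adj A). X *\<^sub>v b = 0\<^sub>v n"
  shows "is_minkowski_inverse A X"
proof -
  define B where "B = mink_adj A"
  have Bc: "B \<in> carrier_mat n m" using A by (simp add: B_def)
  have adjB: "mink_adj B = A" by (simp add: B_def)
  define aX where "aX = mink_adj X"
  have aXc: "aX \<in> carrier_mat m n" using Xc by (simp add: aX_def)
  have d[simp]: "dim_row A = m" "dim_col A = n" "dim_row X = n" "dim_col X = m"
     "dim_row B = n" "dim_col B = m" "dim_row aX = m" "dim_col aX = n"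
    using A Xc Bc aXc by auto
  have XAc: "X * A \<in> carrier_mat n n" using Xc A by simp
  have XAB: "X * A * B = B"
  proof (rule mat_eq_vecI[of _ n m])
    fix y :: "complex vec" assume y: "y \<in> carrier_vec m"
    have "(X * A * B) *\<^sub>v y = (X * A) *\<^sub>v (B *\<^sub>v y)"
      using assoc_mult_mat_vec[OF XAc Bc y] .
    also have "\<dots> = B *\<^sub>v y" using H1 y unfolding mat_range_def B_def by auto
    finally show "(X * A * B) *\<^sub>v y = B *\<^sub>v y" .
  qed (use Xc A Bc in auto)
  have "mink_adj (X * A * B) = mink_adj B * mink_adj (X * A)"
    using madj_mult[OF XAc Bc] .
  also have "\<dots> = A * (B * aX)" unfolding madj_mult[OF Xc A] adjB by (simp add: B_def aX_def)
  finally have ABaX: "A * (B * aX) = A" using XAB adjB by simp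
  have "A * X * A = A * X * (A * (B * aX))" using ABaX by simp
  also have "\<dots> = A * ((X * A * B) * aX)" by (simp add: assoc' del: assoc_mult_mat)
  also have "\<dots> = A" using XAB ABaX by simp
  finally have AXA: "A * X * A = A" .
  have "X * A = X * (A * (B * aX))" using ABaX by simp
  also have "\<dots> = (X * A * B) * aX" by (simp add: assoc' del: assoc_mult_mat)
  also have "\<dots> = B * aX" using XAB by simp
  finally have XA_BaX: "X * A = B * aX" .
  have XAsa: "mink_adj (X * A) = X * A" using madj_mult[OF Xc A] XA_BaX by (simp add: B_def aX_def)
  have XAXA: "X * A * (X * A) = X * A"
  proof -
    have "X * A * (X * A) = X * (A * X * A)" by (simp add: assoc' del: assoc_mult_mat)
    thus ?thesis using AXA by simp
  qed
  define M where "M = B * A + (1\<^sub>m n - X * A)"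
  have BAc: "B * A \<in> carrier_mat n n" using Bc A by simp
  have IXAc: "1\<^sub>m n - X * A \<in> carrier_mat n n" using minus_carrier_mat[OF XAc] .
  have Mc: "M \<in> carrier_mat n n" unfolding M_def using BAc IXAc by simp
  have "X * A * M = X * A * (B * A) + X * A * (1\<^sub>m n - X * A)"
    unfolding M_def by (rule mult_add_distrib_mat[OF XAc BAc IXAc])
  also have "X * A * (1\<^sub>m n - X * A) = X * A * 1\<^sub>m n - X * A * (X * A)"
    by (rule mult_minus_distrib_mat[OF XAc one_carrier_mat XAc])
  also have "\<dots> = 0\<^sub>m n n" using XAXA XAc by simp
  also have "X * A * (B * A) = B * A"
  proof -
    have "X * A * (B * A) = X * A * B * A" by (simp add: assoc' del: assoc_mult_mat)
    thus ?thesis using XAB by simp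
  qed
  finally have XAM: "X * A * M = B * A" using BAc by simp
  have inj: "v = 0\<^sub>v n" if v: "v \<in> carrier_vec n" and Mv: "M *\<^sub>v v = 0\<^sub>v n" for v
  proof -
    have "B *\<^sub>v (A *\<^sub>v v) = (B * A) *\<^sub>v v" using assoc_mult_mat_vec[OF Bc A v] by simp
    also have "\<dots> = (X * A) *\<^sub>v (M *\<^sub>v v)" using assoc_mult_mat_vec[OF XAc Mc v] XAM by simp
    also have "\<dots> = 0\<^sub>v n" using Mv XAc by simp
    finally have "A *\<^sub>v v \<in> mat_kernel B" using A v Bc by (intro mat_kernelI[OF Bc]) auto
    hence "X *\<^sub>v (A *\<^sub>v v) = 0\<^sub>v n" using H2 by (simp add: B_def)
    hence XAv: "(X * A) *\<^sub>v v = 0\<^sub>v n" using assoc_mult_mat_vec[OF Xc A v] by simp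
    have BAv: "(B * A) *\<^sub>v v = 0\<^sub>v n" using \<open>(B * A) *\<^sub>v v = (X * A) *\<^sub>v (M *\<^sub>v v)\<close> Mv XAc by simp
    have "M *\<^sub>v v = (B * A) *\<^sub>v v + (1\<^sub>m n - X * A) *\<^sub>v v"
      unfolding M_def by (rule add_mult_distrib_mat_vec[OF BAc IXAc v])
    also have "(1\<^sub>m n - X * A) *\<^sub>v v = 1\<^sub>m n *\<^sub>v v - (X * A) *\<^sub>v v"
      by (rule minus_mult_distrib_mat_vec[OF one_carrier_mat XAc v])
    finally have "M *\<^sub>v v = v" using BAv XAv v by simp
    thus ?thesis using Mv by simp
  qed
  have "det M \<noteq> 0" using inj det_0_iff_vec_prod_zero[OF Mc] by blast
  from det_non_zero_imp_unit[OF Mc this, of undefined]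
  obtain Z where Zc: "Z \<in> carrier_mat n n" and MZ: "M * Z = 1\<^sub>m n" and ZM: "Z * M = 1\<^sub>m n"
    unfolding Units_def ring_mat_def by auto
  have d2[simp]: "dim_row Z = n" "dim_col Z = n" "dim_row M = n" "dim_col M = n" using Zc Mc by auto
  define W where "W = Z * B"
  have Wc: "W \<in> carrier_mat n m" using Zc Bc by (simp add: W_def)
  have d3[simp]: "dim_row W = n" "dim_col W = m" using Wc by auto
  have "B = X * A * (M * Z) * B" using XAB MZ XAc by simp
  also have "\<dots> = (X * A * M) * (Z * B)" by (simp add: assoc' del: assoc_mult_mat)
  finally have BAW: "B * (A * W) = B" using XAM by (simp add: W_def assoc' del: assoc_mult_mat)
  have Msa: "mink_adj M = M"
    unfolding M_def madj_add[OF BAc IXAc] madj_minus[OF one_carrier_mat XAc] madj_mult[OF Bc A] XAsa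
    by (simp add: adjB B_def)
  have aZc: "mink_adj Z \<in> carrier_mat n n" using Zc by simp
  have "mink_adj Z * M = 1\<^sub>m n" using madj_mult[OF Mc Zc] MZ Msa by simp
  hence Zsa: "mink_adj Z = Z"
    using assoc_mult_mat[OF aZc Mc Zc] MZ right_mult_one_mat[OF aZc] left_mult_one_mat[OF Zc] by simp
  have XAW: "X = X * (A * W)"
  proof (rule mat_eq_vecI[of _ n m])
    fix w :: "complex vec" assume w: "w \<in> carrier_vec m"
    have AWc: "A * W \<in> carrier_mat m m" using A Wc by simp
    have AWw: "(A * W) *\<^sub>v w \<in> carrier_vec m" using AWc w by simp
    have "B *\<^sub>v (w - (A * W) *\<^sub>v w) = B *\<^sub>v w - B *\<^sub>v ((A * W) *\<^sub>v w)"
      by (rule mult_minus_distrib_mat_vec[OF Bc w AWw])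
    also have "B *\<^sub>v ((A * W) *\<^sub>v w) = B *\<^sub>v w"
      using assoc_mult_mat_vec[OF Bc AWc w] BAW by simp
    finally have "B *\<^sub>v (w - (A * W) *\<^sub>v w) = 0\<^sub>v n"
      unfolding minus_cancel_vec[OF mult_mat_vec_carrier[OF Bc w]] .
    hence "w - (A * W) *\<^sub>v w \<in> mat_kernel B" using w AWw by (intro mat_kernelI[OF Bc]) auto
    hence "X *\<^sub>v (w - (A * W) *\<^sub>v w) = 0\<^sub>v n" using H2 by (simp add: B_def)
    hence "X *\<^sub>v w - X *\<^sub>v ((A * W) *\<^sub>v w) = 0\<^sub>v n"
      using mult_minus_distrib_mat_vec[OF Xc w AWw] by simp
    hence "X *\<^sub>v w = X *\<^sub>v ((A * W) *\<^sub>v w)"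
      by (rule vec_minus_zeroD[OF mult_mat_vec_carrier[OF Xc w] mult_mat_vec_carrier[OF Xc AWw]])
    thus "X *\<^sub>v w = (X * (A * W)) *\<^sub>v w" using assoc_mult_mat_vec[OF Xc AWc w] by simp
  qed (use Xc A Wc in auto)
  have XAX: "X * A * X = X"
  proof -
    have "X * A * X = X * A * (X * (A * W))" using XAW by simp
    also have "\<dots> = (X * A * (X * A)) * W" by (simp add: assoc' del: assoc_mult_mat)
    also have "\<dots> = X * (A * W)" using XAXA by (simp add: assoc' del: assoc_mult_mat)
    finally show ?thesis using XAW by simp
  qed
  have AX_AW: "A * X = A * W"
  proof -
    have "A * X = A * (X * (A * W))" using XAW by simp
    also have "\<dots> = (A * X * A) * W" by (simp add: assoc' del: assoc_mult_mat)
    finally show ?thesis using AXA by simp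
  qed
  have "mink_adj (A * X) = mink_adj W * mink_adj A" using AX_AW madj_mult[OF A Wc] by simp
  also have "mink_adj W = A * Z" unfolding W_def madj_mult[OF Zc Bc] Zsa adjB ..
  also have "A * Z * mink_adj A = A * W" unfolding W_def B_def by (simp add: assoc' del: assoc_mult_mat)
  finally have AXsa: "mink_adj (A * X) = A * X" using AX_AW by simp
  show ?thesis unfolding is_minkowski_inverse_def using Xc A AXA XAX XAsa AXsa by simp
qed

lemma sa_lemma: assumes P: "P \<in> carrier_mat k k" and e: "mink_adj P = mink_adj P * P"
  shows "mink_adj P = P"
proof -
  have aP: "mink_adj P \<in> carrier_mat k k" using P by simp
  have "P = mink_adj (mink_adj P * P)" using e by simp
  also have "\<dots> = mink_adj P * P" using madj_mult[OF aP P] by simp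
  finally show ?thesis using e by simp
qed

lemma vec_add_diff: "(u :: complex vec) \<in> carrier_vec k \<Longrightarrow> v \<in> carrier_vec k \<Longrightarrow> v = u + (v - u)"
  by (intro eq_vecI) auto

lemma one_to_three:
  assumes A: "A \<in> carrier_mat m n" and Xc: "X \<in> carrier_mat n m" and X: "is_minkowski_inverse A X"
  shows "is_projector m (A * X) (mat_range A) (mat_kernel (mink_adj A)) \<and>
           is_projector n (X * A) (mat_range X) (mat_kernel A) \<and>
           mat_range X \<subseteq> mat_range (mink_adj A)"
proof -
  define B where "B = mink_adj A"
  have Bc: "B \<in> carrier_mat n m" using A by (simp add: B_def)
  define aX where "aX = mink_adj X"
  have aXc: "aX \<in> carrier_mat m n" using Xc by (simp add: aX_def)
  have d[simp]: "dim_row A = m" "dim_col A = n" "dim_row X = n" "dim_col X = m"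
     "dim_row B = n" "dim_col B = m" "dim_row aX = m" "dim_col aX = n"
    using A Xc Bc aXc by auto
  have 1: "A * X * A = A" "X * A * X = X" "mink_adj (A * X) = A * X" "mink_adj (X * A) = X * A"
    using X unfolding is_minkowski_inverse_def by auto
  have AXc: "A * X \<in> carrier_mat m m" and XAc: "X * A \<in> carrier_mat n n" using A Xc by auto
  have "B = mink_adj (A * X * A)" using 1(1) by (simp add: B_def)
  also have "\<dots> = B * (A * X)" using madj_mult[OF AXc A] 1(3) by (simp add: B_def)
  finally have BAX: "B * (A * X) = B" by simp
  have XA_BaX: "X * A = B * aX" using madj_mult[OF Xc A] 1(4) by (simp add: B_def aX_def)
  have AX_aXB: "A * X = aX * B" using madj_mult[OF A Xc] 1(3) by (simp add: B_def aX_def)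
  have P1: "is_projector m (A * X) (mat_range A) (mat_kernel B)"
    unfolding is_projector_def direct_sum_space_def
  proof (intro conjI ballI)
    show "mat_range A \<subseteq> carrier_vec m" unfolding mat_range_def using A by auto
    show "mat_kernel B \<subseteq> carrier_vec m" using mat_kernel_carrier Bc by auto
    show "A * X \<in> carrier_mat m m" by (rule AXc)
  next
    fix v :: "complex vec" assume v: "v \<in> carrier_vec m"
    have Xv: "X *\<^sub>v v \<in> carrier_vec n" using Xc v by simp
    have s: "A *\<^sub>v (X *\<^sub>v v) \<in> mat_range A" unfolding mat_range_def using Xv by auto
    have sc: "A *\<^sub>v (X *\<^sub>v v) \<in> carrier_vec m" using A Xv by simp
    have "B *\<^sub>v (v - A *\<^sub>v (X *\<^sub>v v)) = B *\<^sub>v v - B *\<^sub>v (A *\<^sub>v (X *\<^sub>v v))"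
      by (rule mult_minus_distrib_mat_vec[OF Bc v sc])
    also have "B *\<^sub>v (A *\<^sub>v (X *\<^sub>v v)) = B *\<^sub>v v"
      using assoc_mult_mat_vec[OF Bc AXc v] assoc_mult_mat_vec[OF A Xc v] BAX by simp
    finally have "B *\<^sub>v (v - A *\<^sub>v (X *\<^sub>v v)) = 0\<^sub>v n"
      unfolding minus_cancel_vec[OF mult_mat_vec_carrier[OF Bc v]] .
    hence t: "v - A *\<^sub>v (X *\<^sub>v v) \<in> mat_kernel B"
      by (intro mat_kernelI[OF Bc]) (use v sc in auto)
    show "\<exists>s\<in>mat_range A. \<exists>t\<in>mat_kernel B. v = s + t"
      using s t vec_add_diff[OF sc v] by blast
  next
    show "mat_range A \<inter> mat_kernel B = {0\<^sub>v m}"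
    proof
      show "{0\<^sub>v m} \<subseteq> mat_range A \<inter> mat_kernel B"
      proof -
        have "0\<^sub>v m = A *\<^sub>v 0\<^sub>v n" using A by simp
        hence "0\<^sub>v m \<in> mat_range A" unfolding mat_range_def by auto
        moreover have "0\<^sub>v m \<in> mat_kernel B" by (rule mat_kernelI[OF Bc]) (use Bc in auto)
        ultimately show ?thesis by auto
      qed
    next
      show "mat_range A \<inter> mat_kernel B \<subseteq> {0\<^sub>v m}"
      proof
        fix s assume "s \<in> mat_range A \<inter> mat_kernel B"
        then obtain x where x: "x \<in> carrier_vec n" "s = A *\<^sub>v x" and k: "s \<in> mat_kernel B"
          unfolding mat_range_def by auto
        have Bs: "B *\<^sub>v s = 0\<^sub>v n" using mat_kernelD[OF Bc k] by simp
        have "s = (A * X * A) *\<^sub>v x" using 1(1) x by simp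
        also have "\<dots> = (aX * B) *\<^sub>v s" using AX_aXB x
          assoc_mult_mat_vec[OF AXc A x(1)] by simp
        also have "\<dots> = aX *\<^sub>v (B *\<^sub>v s)" using assoc_mult_mat_vec[OF aXc Bc] x A by simp
        also have "\<dots> = 0\<^sub>v m" using Bs aXc by simp
        finally show "s \<in> {0\<^sub>v m}" by simp
      qed
    qed
  next
    fix s assume "s \<in> mat_range A"
    then obtain x where x: "x \<in> carrier_vec n" "s = A *\<^sub>v x" unfolding mat_range_def by auto
    have "(A * X) *\<^sub>v s = (A * X * A) *\<^sub>v x" using assoc_mult_mat_vec[OF AXc A x(1)] x by simp
    thus "(A * X) *\<^sub>v s = s" using 1(1) x by simp
  next
    fix t assume t: "t \<in> mat_kernel B"
    have tc: "t \<in> carrier_vec m" and Bt: "B *\<^sub>v t = 0\<^sub>v n" using mat_kernelD[OF Bc t] by auto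
    have "(A * X) *\<^sub>v t = aX *\<^sub>v (B *\<^sub>v t)" using AX_aXB assoc_mult_mat_vec[OF aXc Bc tc] by simp
    thus "(A * X) *\<^sub>v t = 0\<^sub>v m" using Bt aXc by simp
  qed
  have P2: "is_projector n (X * A) (mat_range X) (mat_kernel A)"
    unfolding is_projector_def direct_sum_space_def
  proof (intro conjI ballI)
    show "mat_range X \<subseteq> carrier_vec n" unfolding mat_range_def using Xc by auto
    show "mat_kernel A \<subseteq> carrier_vec n" using mat_kernel_carrier A by auto
    show "X * A \<in> carrier_mat n n" by (rule XAc)
  next
    fix v :: "complex vec" assume v: "v \<in> carrier_vec n"
    have Av: "A *\<^sub>v v \<in> carrier_vec m" using A v by simp
    have s: "X *\<^sub>v (A *\<^sub>v v) \<in> mat_range X" unfolding mat_range_def using Av by auto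
    have sc: "X *\<^sub>v (A *\<^sub>v v) \<in> carrier_vec n" using Xc Av by simp
    have "A *\<^sub>v (v - X *\<^sub>v (A *\<^sub>v v)) = A *\<^sub>v v - A *\<^sub>v (X *\<^sub>v (A *\<^sub>v v))"
      by (rule mult_minus_distrib_mat_vec[OF A v sc])
    also have "A *\<^sub>v (X *\<^sub>v (A *\<^sub>v v)) = A *\<^sub>v v"
      using assoc_mult_mat_vec[OF AXc A v] assoc_mult_mat_vec[OF A Xc Av] 1(1) by simp
    finally have "A *\<^sub>v (v - X *\<^sub>v (A *\<^sub>v v)) = 0\<^sub>v m"
      unfolding minus_cancel_vec[OF mult_mat_vec_carrier[OF A v]] .
    hence t: "v - X *\<^sub>v (A *\<^sub>v v) \<in> mat_kernel A"
      by (intro mat_kernelI[OF A]) (use v sc in auto)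
    show "\<exists>s\<in>mat_range X. \<exists>t\<in>mat_kernel A. v = s + t"
      using s t vec_add_diff[OF sc v] by blast
  next
    show "mat_range X \<inter> mat_kernel A = {0\<^sub>v n}"
    proof
      show "{0\<^sub>v n} \<subseteq> mat_range X \<inter> mat_kernel A"
      proof -
        have "0\<^sub>v n = X *\<^sub>v 0\<^sub>v m" using Xc by simp
        hence "0\<^sub>v n \<in> mat_range X" unfolding mat_range_def by auto
        moreover have "0\<^sub>v n \<in> mat_kernel A" by (rule mat_kernelI[OF A]) (use A in auto)
        ultimately show ?thesis by auto
      qed
    next
      show "mat_range X \<inter> mat_kernel A \<subseteq> {0\<^sub>v n}"
      proof
        fix s assume "s \<in> mat_range X \<inter> mat_kernel A"
        then obtain x where x: "x \<in> carrier_vec m" "s = X *\<^sub>v x" and k: "s \<in> mat_kernel A"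
          unfolding mat_range_def by auto
        have As: "A *\<^sub>v s = 0\<^sub>v m" using mat_kernelD[OF A k] by simp
        have "s = (X * A * X) *\<^sub>v x" using 1(2) x by simp
        also have "\<dots> = X *\<^sub>v (A *\<^sub>v s)"
          using assoc_mult_mat_vec[OF XAc Xc x(1)] assoc_mult_mat_vec[OF Xc A] x Xc by simp
        also have "\<dots> = 0\<^sub>v n" using As Xc by simp
        finally show "s \<in> {0\<^sub>v n}" by simp
      qed
    qed
  next
    fix s assume "s \<in> mat_range X"
    then obtain x where x: "x \<in> carrier_vec m" "s = X *\<^sub>v x" unfolding mat_range_def by auto
    have "(X * A) *\<^sub>v s = (X * A * X) *\<^sub>v x" using assoc_mult_mat_vec[OF XAc Xc x(1)] x by simp
    thus "(X * A) *\<^sub>v s = s" using 1(2) x by simp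
  next
    fix t assume t: "t \<in> mat_kernel A"
    have tc: "t \<in> carrier_vec n" and At: "A *\<^sub>v t = 0\<^sub>v m" using mat_kernelD[OF A t] by auto
    have "(X * A) *\<^sub>v t = X *\<^sub>v (A *\<^sub>v t)" using assoc_mult_mat_vec[OF Xc A tc] by simp
    thus "(X * A) *\<^sub>v t = 0\<^sub>v n" using At Xc by simp
  qed
  have P3: "mat_range X \<subseteq> mat_range B"
  proof
    fix s assume "s \<in> mat_range X"
    then obtain x where x: "x \<in> carrier_vec m" "s = X *\<^sub>v x" unfolding mat_range_def by auto
    have "s = (X * A * X) *\<^sub>v x" using 1(2) x by simp
    also have "\<dots> = (B * aX * X) *\<^sub>v x" using XA_BaX by simp
    also have "\<dots> = B *\<^sub>v (aX *\<^sub>v (X *\<^sub>v x))"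
      using assoc_mult_mat_vec[OF mult_carrier_mat[OF Bc aXc] Xc x(1)]
        assoc_mult_mat_vec[OF Bc aXc mult_mat_vec_carrier[OF Xc x(1)]] by simp
    finally have "s = B *\<^sub>v (aX *\<^sub>v (X *\<^sub>v x))" .
    moreover have "aX *\<^sub>v (X *\<^sub>v x) \<in> carrier_vec (dim_col B)"
      using mult_mat_vec_carrier[OF aXc mult_mat_vec_carrier[OF Xc x(1)]] by simp
    ultimately show "s \<in> mat_range B" unfolding mat_range_def by blast
  qed
  show ?thesis using P1 P2 P3 by (simp add: B_def)
qed

lemma three_to_one:
  assumes A: "A \<in> carrier_mat m n" and Xc: "X \<in> carrier_mat n m"
    and P1: "is_projector m (A * X) (mat_range A) (mat_kernel (mink_adj A))"
    and P2: "is_projector n (X * A) (mat_range X) (mat_kernel A)"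
    and P3: "mat_range X \<subseteq> mat_range (mink_adj A)"
  shows "is_minkowski_inverse A X"
proof -
  define B where "B = mink_adj A"
  have Bc: "B \<in> carrier_mat n m" using A by (simp add: B_def)
  have adjB: "mink_adj B = A" by (simp add: B_def)
  define aX where "aX = mink_adj X"
  have aXc: "aX \<in> carrier_mat m n" using Xc by (simp add: aX_def)
  have d[simp]: "dim_row A = m" "dim_col A = n" "dim_row X = n" "dim_col X = m"
     "dim_row B = n" "dim_col B = m" "dim_row aX = m" "dim_col aX = n"
    using A Xc Bc aXc by auto
  have AXc: "A * X \<in> carrier_mat m m" and XAc: "X * A \<in> carrier_mat n n" using A Xc by auto
  have AXA: "A * X * A = A"
  proof (rule mat_eq_vecI[of _ m n])
    fix x :: "complex vec" assume x: "x \<in> carrier_vec n"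
    have "A *\<^sub>v x \<in> mat_range A" unfolding mat_range_def using x by auto
    hence "(A * X) *\<^sub>v (A *\<^sub>v x) = A *\<^sub>v x" using P1 unfolding is_projector_def by auto
    thus "(A * X * A) *\<^sub>v x = A *\<^sub>v x" using assoc_mult_mat_vec[OF AXc A x] by simp
  qed (use A Xc in auto)
  have XAX: "X * A * X = X"
  proof (rule mat_eq_vecI[of _ n m])
    fix x :: "complex vec" assume x: "x \<in> carrier_vec m"
    have "X *\<^sub>v x \<in> mat_range X" unfolding mat_range_def using x by auto
    hence "(X * A) *\<^sub>v (X *\<^sub>v x) = X *\<^sub>v x" using P2 unfolding is_projector_def by auto
    thus "(X * A * X) *\<^sub>v x = X *\<^sub>v x" using assoc_mult_mat_vec[OF XAc Xc x] by simp
  qed (use A Xc in auto)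
  obtain Y where Yc: "Y \<in> carrier_mat m m" and XBY: "X = B * Y"
  proof -
    have "\<exists>Y \<in> carrier_mat m m. X = B * Y"
    proof (rule range_factor[OF Xc Bc])
      fix v :: "complex vec" assume "v \<in> carrier_vec m"
      hence "X *\<^sub>v v \<in> mat_range X" unfolding mat_range_def by auto
      thus "X *\<^sub>v v \<in> mat_range B" using P3 by (auto simp: B_def)
    qed
    thus ?thesis using that by blast
  qed
  have aYc: "mink_adj Y \<in> carrier_mat m m" using Yc by simp
  have dY[simp]: "dim_row Y = m" "dim_col Y = m" using Yc by auto
  have aX_eq: "aX = mink_adj Y * A" unfolding aX_def XBY madj_mult[OF Bc Yc] adjB ..
  have "mink_adj (X * A) = B * aX" using madj_mult[OF Xc A] by (simp add: B_def aX_def)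
  also have "\<dots> = B * (mink_adj Y * A)" using aX_eq by simp
  finally have XAadj: "mink_adj (X * A) = B * (mink_adj Y * A)" .
  have "mink_adj (X * A) * (X * A) = B * (mink_adj Y * (A * X * A))"
    unfolding XAadj by (simp add: assoc' del: assoc_mult_mat)
  also have "\<dots> = mink_adj (X * A)" using AXA XAadj by simp
  finally have XAsa: "mink_adj (X * A) = X * A" using sa_lemma[OF XAc] by simp
  have AXadj: "mink_adj (A * X) = aX * B" using madj_mult[OF A Xc] by (simp add: B_def aX_def)
  have "mink_adj (A * X) = mink_adj (A * X) * (A * X)"
  proof (rule mat_eq_vecI[of _ m m])
    fix w :: "complex vec" assume w: "w \<in> carrier_vec m"
    obtain s t where s: "s \<in> mat_range A" and t: "t \<in> mat_kernel B" and wst: "w = s + t"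
      using P1 w unfolding is_projector_def direct_sum_space_def B_def by blast
    obtain x where x: "x \<in> carrier_vec n" "s = A *\<^sub>v x" using s unfolding mat_range_def by auto
    have sc: "s \<in> carrier_vec m" using x A by simp
    have tc: "t \<in> carrier_vec m" and Bt: "B *\<^sub>v t = 0\<^sub>v n" using mat_kernelD[OF Bc t] by auto
    have aAXc: "mink_adj (A * X) \<in> carrier_mat m m" using AXc by simp
    have AXs: "(A * X) *\<^sub>v s = s" using P1 s unfolding is_projector_def by auto
    have AXt: "(A * X) *\<^sub>v t = 0\<^sub>v m" using P1 t unfolding is_projector_def B_def by auto
    have aAXt: "mink_adj (A * X) *\<^sub>v t = 0\<^sub>v m"
      unfolding AXadj using assoc_mult_mat_vec[OF aXc Bc tc] Bt aXc by simp
    have "(mink_adj (A * X) * (A * X)) *\<^sub>v w = mink_adj (A * X) *\<^sub>v ((A * X) *\<^sub>v w)"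
      using assoc_mult_mat_vec[OF aAXc AXc w] .
    also have "(A * X) *\<^sub>v w = s" unfolding wst
      using mult_add_distrib_mat_vec[OF AXc sc tc] AXs AXt sc by simp
    also have "mink_adj (A * X) *\<^sub>v s = mink_adj (A * X) *\<^sub>v w" unfolding wst
      using mult_add_distrib_mat_vec[OF aAXc sc tc] aAXt right_zero_vec[OF mult_mat_vec_carrier[OF aAXc sc]] by simp
    finally show "mink_adj (A * X) *\<^sub>v w = (mink_adj (A * X) * (A * X)) *\<^sub>v w" by simp
  qed (use AXc in auto)
  hence AXsa: "mink_adj (A * X) = A * X" using sa_lemma[OF AXc] by simp
  show ?thesis unfolding is_minkowski_inverse_def using Xc A AXA XAX XAsa AXsa by simp
qed

theorem theorem5p6:
  fixes A X :: "complex mat" and m n :: nat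
  assumes "m > 0" "n > 0"
    and "A \<in> carrier_mat m n" "X \<in> carrier_mat n m"
  shows "((mink_inverse_exists A \<and> X = mink_inverse A) \<longleftrightarrow>
          ((\<forall>a \<in> mat_range (mink_adj A). X * A *\<^sub>v a = a) \<and>
           (\<forall>b \<in> mat_kernel (mink_adj A). X *\<^sub>v b = 0\<^sub>v n)))
       \<and> ((mink_inverse_exists A \<and> X = mink_inverse A) \<longleftrightarrow>
          (is_projector m (A * X) (mat_range A) (mat_kernel (mink_adj A)) \<and>
           is_projector n (X * A) (mat_range X) (mat_kernel A) \<and>
           mat_range X \<subseteq> mat_range (mink_adj A)))"
  unfolding MI_iff[OF assms(3)]
  using one_to_two[OF assms(3,4)] two_to_one[OF assms(3,4)]
    one_to_three[OF assms(3,4)] three_to_one[OF assms(3,4)] by blast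

end
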